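(* Consider an $\mathbb{H}_{2n+1}$-structure on $\mathbb{P}V$ such that $T$ fixes every point of the boundary hyperplane $\mathbb{P}V'$, with associated algebra $\mathcal{A}$, Lie algebra $\mathfrak{h}_{2n+1}=\mathfrak{w}\oplus\mathbb{C}t$, maps $\theta$ and $ev$ as in the context. Then $\theta(t)=0$, $\theta$ is injective on $\mathfrak{w}$, $\theta(\mathfrak{w})$ generates $\mathfrak{m}_{\mathcal{B}}=\theta(\mathfrak{m})$ as an associative algebra, and $\theta(\ker(ev))=0$.
   Context: Work over $\mathbb{C}$, $n\ge1$. The Heisenberg group $\mathbb{H}_{2n+1}$ is $\mathbb{W}\times\mathbb{C}$ ($\mathbb{W}$ a $2n$-dimensional space with non-degenerate skew form $\omega$) with law $(w_1,t_1)(w_2,t_2)=(w_1+w_2,t_1+t_2+\tfrac12\omega(w_1,w_2))$; $T=(0,1)$, $\mathbb{I}=\mathbb{C}T$ its center. $V\cong\mathbb{C}^{2n+2}$. An $\mathbb{H}_{2n+1}$-structure on $\mathbb{P}V$ is an effective algebraic action with dense open orbit, with boundary a hyperplane $\mathbb{P}V'$. Regard $\mathbb{H}_{2n+1}\subset\mathbb{P}\mathrm{GL}_{2n+2}(\mathbb{C})$; choosing a basis, it lies in the image of the group of unipotent upper-triangular matrices, and its Lie algebra is realized as a Lie subalgebra $\mathfrak{h}_{2n+1}$ of strictly upper-triangular matrices (commutator bracket), written $\mathfrak{h}_{2n+1}=\mathfrak{w}\oplus\mathbb{C}t$ with $\mathbb{C}t$ the center (the tangent line of $\mathbb{I}$)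 and $[\mathfrak{w},\mathfrak{w}]=\mathbb{C}t$. With $\pi:\mathrm{GL}_{2n+2}\to\mathbb{P}\mathrm{GL}_{2n+2}$ the projection, $\mathcal{A}$ is the unital associative subalgebra of $\mathrm{Mat}_{2n+2}(\mathbb{C})$ generated by $\pi^{-1}(\mathbb{H}_{2n+1})$; $\mathcal{A}=\mathbb{C}I\oplus\mathfrak{m}$ where $\mathfrak{m}$ is the associative subalgebra generated by $\mathfrak{h}_{2n+1}$. Fix $o$ in the open orbit with representative $\hat o\in V$, and let $ev:\mathcal{A}\to V$, $a\mapsto a\hat o$. Let $v=\overline{\mathbb{I}\cdot o}\setminus\mathbb{I}\cdot o$, $\hat v$ a representative, $\widetilde V=V/\mathbb{C}\hat v$. The point $v$ is fixed by $\mathbb{H}_{2n+1}$, so every element of $\mathcal{A}$ preserves $\mathbb{C}\hat v$; let $\theta:\mathcal{A}\to\mathrm{End}(\widetilde V)$ send $a$ to the induced endomorphism of $\widetilde V$, $\mathcal{B}=\theta(\mathcal{A})$ and $\mathfrak{m}_{\mathcal{B}}=\theta(\mathfrak{m})$. *)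

theory Defs
  imports "HOL-Analysis.Analysis" "HOL-Library.FuncSet"
begin

type_synonym 'm cmat = "complex ^ 'm ^ 'm"

definition msc :: "complex \<Rightarrow> 'm::finite cmat \<Rightarrow> 'm cmat" where
  "msc c M = (\<chi> i j. c * M $ i $ j)"

definition mbr :: "'m::finite cmat \<Rightarrow> 'm cmat \<Rightarrow> 'm cmat" where
  "mbr M N = M ** N - N ** M"

fun mpow :: "'m::finite cmat \<Rightarrow> nat \<Rightarrow> 'm cmat" where
  "mpow M 0 = mat 1"
| "mpow M (Suc k) = M ** mpow M k"

text \<open>Matrix exponential; exact for nilpotent matrices (X^CARD('m) = 0),
  in particular for strictly upper-triangular ones.\<close>
definition mexp :: "'m::finite cmat \<Rightarrow> 'm cmat" where
  "mexp X = (\<Sum>k<CARD('m). msc (1 / of_nat (fact k)) (mpow X k))"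

definition strict_upper :: "'m::{finite,wellorder} cmat \<Rightarrow> bool" where
  "strict_upper M \<longleftrightarrow> (\<forall>i j. j \<le> i \<longrightarrow> M $ i $ j = 0)"

inductive_set alg :: "'m::finite cmat set \<Rightarrow> 'm cmat set" for S where
  gen: "x \<in> S \<Longrightarrow> x \<in> alg S"
| zero: "0 \<in> alg S"
| add: "x \<in> alg S \<Longrightarrow> y \<in> alg S \<Longrightarrow> x + y \<in> alg S"
| sc: "x \<in> alg S \<Longrightarrow> msc c x \<in> alg S"
| mul: "x \<in> alg S \<Longrightarrow> y \<in> alg S \<Longrightarrow> x ** y \<in> alg S"

inductive_set ualg :: "'m::finite cmat set \<Rightarrow> 'm cmat set" for S where
  gen: "x \<in> S \<Longrightarrow> x \<in> ualg S"
| one: "mat 1 \<in> ualg S"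
| zero: "0 \<in> ualg S"
| add: "x \<in> ualg S \<Longrightarrow> y \<in> ualg S \<Longrightarrow> x + y \<in> ualg S"
| sc: "x \<in> ualg S \<Longrightarrow> msc c x \<in> ualg S"
| mul: "x \<in> ualg S \<Longrightarrow> y \<in> ualg S \<Longrightarrow> x ** y \<in> ualg S"

definition cline :: "complex ^ 'm \<Rightarrow> (complex ^ 'm) set" where
  "cline u = vec.span {u}"

definition projsp :: "(complex ^ 'm) set set" where
  "projsp = {cline u | u. u \<noteq> 0}"

text \<open>Closure in P V for the quotient topology of (V - 0) -> P V
  (the quotient map is open, so this is the closure).\<close>
definition pclosure :: "(complex ^ 'm) set set \<Rightarrow> (complex ^ 'm) set set" where
  "pclosure S = {cline u | u. u \<noteq> 0 \<and> u \<in> closure (\<Union> S)}"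

definition cls :: "complex ^ 'm \<Rightarrow> complex ^ 'm \<Rightarrow> (complex ^ 'm) set" where
  "cls v u = {u + c *s v | c. True}"

definition Vt :: "complex ^ 'm \<Rightarrow> (complex ^ 'm) set set" where
  "Vt v = range (cls v)"

text \<open>theta: induced endomorphism of V / C v (for a preserving C v).\<close>
definition theta :: "complex ^ 'm \<Rightarrow> 'm::finite cmat \<Rightarrow> ((complex ^ 'm) set \<Rightarrow> (complex ^ 'm) set)" where
  "theta v a = (\<lambda>U\<in>Vt v. {a *v u + c *s v | u c. u \<in> U})"

definition ezero :: "complex ^ 'm \<Rightarrow> ((complex ^ 'm) set \<Rightarrow> (complex ^ 'm) set)" where
  "ezero v = (\<lambda>U\<in>Vt v. cls v 0)"

definition eadd :: "complex ^ 'm \<Rightarrow> ((complex ^ 'm) set \<Rightarrow> (complex ^ 'm) set)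
   \<Rightarrow> ((complex ^ 'm) set \<Rightarrow> (complex ^ 'm) set) \<Rightarrow> ((complex ^ 'm) set \<Rightarrow> (complex ^ 'm) set)" where
  "eadd v f g = (\<lambda>U\<in>Vt v. {x + y | x y. x \<in> f U \<and> y \<in> g U})"

definition esc :: "complex ^ 'm \<Rightarrow> complex
   \<Rightarrow> ((complex ^ 'm) set \<Rightarrow> (complex ^ 'm) set) \<Rightarrow> ((complex ^ 'm) set \<Rightarrow> (complex ^ 'm) set)" where
  "esc v c f = (\<lambda>U\<in>Vt v. {c *s x + d *s v | x d. x \<in> f U})"

definition ecomp :: "complex ^ 'm \<Rightarrow> ((complex ^ 'm) set \<Rightarrow> (complex ^ 'm) set)
   \<Rightarrow> ((complex ^ 'm) set \<Rightarrow> (complex ^ 'm) set) \<Rightarrow> ((complex ^ 'm) set \<Rightarrow> (complex ^ 'm) set)" where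
  "ecomp v f g = (\<lambda>U\<in>Vt v. f (g U))"

inductive_set ealg :: "complex ^ 'm \<Rightarrow> ((complex ^ 'm) set \<Rightarrow> (complex ^ 'm) set) set
    \<Rightarrow> ((complex ^ 'm) set \<Rightarrow> (complex ^ 'm) set) set" for v S where
  gen: "f \<in> S \<Longrightarrow> f \<in> ealg v S"
| zero: "ezero v \<in> ealg v S"
| add: "f \<in> ealg v S \<Longrightarrow> g \<in> ealg v S \<Longrightarrow> eadd v f g \<in> ealg v S"
| sc: "f \<in> ealg v S \<Longrightarrow> esc v c f \<in> ealg v S"
| mul: "f \<in> ealg v S \<Longrightarrow> g \<in> ealg v S \<Longrightarrow> ecomp v f g \<in> ealg v S"

end

theory Submission
  imports Defs
begin

lemma msc_add: fixes A B :: "'m::finite cmat" shows "msc c (A + B) = msc c A + msc c B"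
  by (simp add: msc_def vec_eq_iff algebra_simps)
lemma msc_add2: fixes A :: "'m::finite cmat" shows "msc (c + d) A = msc c A + msc d A"
  by (simp add: msc_def vec_eq_iff algebra_simps)
lemma msc_msc: fixes A :: "'m::finite cmat" shows "msc c (msc d A) = msc (c * d) A"
  by (simp add: msc_def vec_eq_iff algebra_simps)
lemma msc_1[simp]: fixes A :: "'m::finite cmat" shows "msc 1 A = A"
  by (simp add: msc_def vec_eq_iff)
lemma msc_0[simp]: fixes A :: "'m::finite cmat" shows "msc 0 A = 0"
  by (simp add: msc_def vec_eq_iff)
lemma msc_zero[simp]: "msc c (0::'m::finite cmat) = 0"
  by (simp add: msc_def vec_eq_iff)
lemma msc_neg: fixes A :: "'m::finite cmat" shows "msc (-1) A = - A"
  by (simp add: msc_def vec_eq_iff)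
lemma msc_sum: fixes f :: "'a \<Rightarrow> 'm::finite cmat" shows "msc c (sum f S) = (\<Sum>k\<in>S. msc c (f k))"
  by (induction S rule: infinite_finite_induct) (auto simp: msc_add)
lemma msc_mult_left: fixes A B :: "'m::finite cmat" shows "msc c A ** B = msc c (A ** B)"
  by (simp add: msc_def vec_eq_iff matrix_matrix_mult_def sum_distrib_left algebra_simps)
lemma msc_mult_right: fixes A B :: "'m::finite cmat" shows "A ** msc c B = msc c (A ** B)"
  by (simp add: msc_def vec_eq_iff matrix_matrix_mult_def sum_distrib_left algebra_simps)
lemma msc_mv: fixes A :: "'m::finite cmat" shows "msc c A *v u = c *s (A *v u)"
  by (simp add: msc_def vec_eq_iff matrix_vector_mult_def sum_distrib_left algebra_simps)
lemma mv_smult: fixes A :: "'m::finite cmat" shows "A *v (c *s u) = c *s (A *v u)"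
  by (simp add: vec_eq_iff matrix_vector_mult_def sum_distrib_left algebra_simps)
lemma mv_sum: fixes A :: "'m::finite cmat" shows "A *v (sum f S) = (\<Sum>k\<in>S. A *v f k)"
  by (induction S rule: infinite_finite_induct) (auto simp: matrix_vector_right_distrib)
lemma sum_mv: fixes f :: "'a \<Rightarrow> 'm::finite cmat" shows "(sum f S) *v u = (\<Sum>k\<in>S. f k *v u)"
  by (induction S rule: infinite_finite_induct) (auto simp: matrix_vector_mult_add_rdistrib)

lemma mat_add_rdistrib: fixes A B C :: "'m::finite cmat" shows "((A + B) ** C) = (A ** C) + (B ** C)"
  by (simp add: matrix_matrix_mult_def vec_eq_iff sum.distrib algebra_simps)
lemma mat_sub_rdistrib: fixes A B C :: "'m::finite cmat" shows "((A - B) ** C) = (A ** C) - (B ** C)"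
  unfolding matrix_matrix_mult_def vec_eq_iff by (simp add: sum_subtractf[symmetric] algebra_simps)
lemma mat_sub_ldistrib: fixes A B C :: "'m::finite cmat" shows "(C ** (A - B)) = (C ** A) - (C ** B)"
  unfolding matrix_matrix_mult_def vec_eq_iff by (simp add: sum_subtractf[symmetric] algebra_simps)
lemma mbr_add: fixes A B C :: "'m::finite cmat" shows "mbr (A + B) C = mbr A C + mbr B C"
  by (simp add: mbr_def mat_add_rdistrib matrix_add_ldistrib)
lemma mbr_add2: fixes A B C :: "'m::finite cmat" shows "mbr C (A + B) = mbr C A + mbr C B"
  by (simp add: mbr_def mat_add_rdistrib matrix_add_ldistrib)
lemma mbr_msc: fixes A B :: "'m::finite cmat" shows "mbr (msc c A) B = msc c (mbr A B)"
  by (simp add: mbr_def msc_mult_left msc_mult_right) (simp add: msc_def vec_eq_iff algebra_simps)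
lemma mbr_msc2: fixes A B :: "'m::finite cmat" shows "mbr B (msc c A) = msc c (mbr B A)"
  by (simp add: mbr_def msc_mult_left msc_mult_right) (simp add: msc_def vec_eq_iff algebra_simps)
lemma mbr_swap: fixes A B :: "'m::finite cmat" shows "mbr B A = msc (-1) (mbr A B)"
  by (simp add: mbr_def msc_neg)
lemma mbr_mult: fixes A B C :: "'m::finite cmat" shows "mbr (A ** B) C = A ** mbr B C + mbr A C ** B"
  by (simp add: mbr_def matrix_mul_assoc mat_sub_ldistrib mat_sub_rdistrib)
lemma mbr_0[simp]: fixes C :: "'m::finite cmat" shows "mbr 0 C = 0"
  by (simp add: mbr_def)
lemma mbr_02[simp]: fixes C :: "'m::finite cmat" shows "mbr C 0 = 0"
  by (simp add: mbr_def)
lemma mbr_1[simp]: fixes C :: "'m::finite cmat" shows "mbr (mat 1) C = 0"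
  by (simp add: mbr_def)
lemma mbr_self[simp]: fixes C :: "'m::finite cmat" shows "mbr C C = 0"
  by (simp add: mbr_def)

section \<open>Powers and exponential\<close>

lemma mpow_add: fixes M :: "'m::finite cmat" shows "mpow M (a + b) = mpow M a ** mpow M b"
  by (induction a) (auto simp: matrix_mul_assoc)

lemma strict_upper_pow_entry:
  fixes M :: "'m::{finite,wellorder} cmat"
  assumes "strict_upper M" "mpow M k $ i $ j \<noteq> 0"
  shows "i \<le> j \<and> k \<le> card {l. i \<le> l \<and> l < j}"
  using assms(2)
proof (induction k arbitrary: i)
  case 0
  then show ?case by (auto simp: mat_def split: if_splits)
next
  case (Suc k)
  have "(\<Sum>l\<in>UNIV. M $ i $ l * mpow M k $ l $ j) \<noteq> 0"
    using Suc.prems by (simp add: matrix_matrix_mult_def)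
  then obtain l where l: "M $ i $ l * mpow M k $ l $ j \<noteq> 0"
    by (meson sum.neutral)
  then have il: "i < l" using assms(1) unfolding strict_upper_def
    by (metis mult_eq_0_iff not_le)
  from l have IH: "l \<le> j \<and> k \<le> card {x. l \<le> x \<and> x < j}" using Suc.IH by simp
  have sub: "insert i {x. l \<le> x \<and> x < j} \<subseteq> {x. i \<le> x \<and> x < j}"
    using il IH by auto
  have "card (insert i {x. l \<le> x \<and> x < j}) = Suc (card {x. l \<le> x \<and> x < j})"
    using il by (subst card_insert_disjoint) auto
  then have "Suc k \<le> card {x. i \<le> x \<and> x < j}"
    using card_mono[OF _ sub] IH by simp
  moreover have "i \<le> j" using less_imp_le[OF less_le_trans[OF il conjunct1[OF IH]]] .
  ultimately show ?case by simp
qed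

lemma strict_upper_nilpotent:
  fixes M :: "'m::{finite,wellorder} cmat"
  assumes "strict_upper M"
  shows "mpow M CARD('m) = 0"
proof -
  have "mpow M CARD('m) $ i $ j = 0" for i j
  proof (rule ccontr)
    assume "mpow M CARD('m) $ i $ j \<noteq> 0"
    then have "CARD('m) \<le> card {l. i \<le> l \<and> l < j}"
      using strict_upper_pow_entry[OF assms] by blast
    moreover have "card {l. i \<le> l \<and> l < j} < CARD('m)"
      by (rule psubset_card_mono) auto
    ultimately show False by simp
  qed
  then show ?thesis by (simp add: vec_eq_iff)
qed

lemma mpow_mv_eigen:
  fixes M :: "'m::finite cmat"
  assumes "M *v u = \<mu> *s u"
  shows "mpow M k *v u = (\<mu> ^ k) *s u"
  by (induction k) (auto simp: matrix_vector_mul_assoc[symmetric] mv_smult assms)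

lemma nil_eigen:
  fixes M :: "'m::{finite,wellorder} cmat"
  assumes "strict_upper M" "M *v u = \<mu> *s u" "u \<noteq> 0"
  shows "\<mu> = 0"
proof -
  have "(\<mu> ^ CARD('m)) *s u = 0"
    using mpow_mv_eigen[OF assms(2), of "CARD('m)"] strict_upper_nilpotent[OF assms(1)] by simp
  then show ?thesis using assms(3) by simp
qed

lemma strict_upper_add: "strict_upper A \<Longrightarrow> strict_upper B \<Longrightarrow> strict_upper (A + B)"
  by (simp add: strict_upper_def)
lemma strict_upper_msc: "strict_upper A \<Longrightarrow> strict_upper (msc c A)"
  by (simp add: strict_upper_def msc_def)
lemma strict_upper_0: "strict_upper 0"
  by (simp add: strict_upper_def)

lemma mexp_mv: fixes M :: "'m::finite cmat"
  shows "mexp M *v u = (\<Sum>k<CARD('m). (1 / of_nat (fact k)) *s (mpow M k *v u))"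
  by (simp add: mexp_def sum_mv msc_mv)

lemma mpow_mexp_mv: fixes M :: "'m::finite cmat"
  shows "mpow M i *v (mexp M *v u) = (\<Sum>k<CARD('m). (1 / of_nat (fact k)) *s (mpow M (k + i) *v u))"
  by (simp add: mexp_mv mv_sum mv_smult matrix_vector_mul_assoc mpow_add[symmetric] add.commute)

lemma mexp_sq0:
  fixes M :: "'m::finite cmat"
  assumes "M ** M = 0" "CARD('m) \<ge> 2"
  shows "mexp M = mat 1 + M"
proof -
  have p: "mpow M k = 0" if "k \<ge> 2" for k
  proof -
    have k: "k = Suc (Suc (k - 2))" using that by simp
    have "mpow M (Suc (Suc (k - 2))) = (M ** M) ** mpow M (k - 2)"
      by (simp add: matrix_mul_assoc)
    then show ?thesis using k assms(1) by simp
  qed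
  have t: "msc (1 / of_nat (fact k)) (mpow M k) = (if k = 0 then mat 1 else 0) + (if k = 1 then M else 0)" for k
  proof (cases "k \<ge> 2")
    case True then show ?thesis using p[OF True] by simp
  next
    case False
    then have "k = 0 \<or> k = 1" by linarith
    then show ?thesis by (elim disjE) simp_all
  qed
  have "mexp M = (\<Sum>k<CARD('m). (if k = 0 then mat 1 else 0) + (if k = 1 then M else 0))"
    unfolding mexp_def using t by simp
  also have "\<dots> = mat 1 + M"
    using assms(2) by (simp add: sum.distrib)
  finally show ?thesis .
qed

section \<open>Lines, classes, theta\<close>

lemma cline_eq: "cline u = range (\<lambda>k. k *s u)"
  by (simp add: cline_def vec.span_singleton)

lemma in_cline: "w \<in> cline u \<longleftrightarrow> (\<exists>c. w = c *s u)"
  by (auto simp: cline_eq)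

lemma cline_add: "a \<in> cline v \<Longrightarrow> b \<in> cline v \<Longrightarrow> a + b \<in> cline v"
  by (auto simp: in_cline) (metis vector_sadd_rdistrib)

lemma cline_smult: "a \<in> cline v \<Longrightarrow> c *s a \<in> cline v"
  by (auto simp: in_cline vector_smult_assoc)

lemma cline_0[simp]: "0 \<in> cline v"
  by (auto simp: in_cline intro: exI[of _ 0])

lemma cline_self[simp]: "v \<in> cline v"
  by (auto simp: in_cline intro: exI[of _ 1])

lemma cline_diff: "a \<in> cline v \<Longrightarrow> b \<in> cline v \<Longrightarrow> a - b \<in> cline v"
  using cline_add[of a v "(-1) *s b"] cline_smult[of b v "-1"] by (simp add: vector_sneg_minus1[symmetric])

lemma cline_sum: "(\<And>k. k \<in> S \<Longrightarrow> f k \<in> cline v) \<Longrightarrow> sum f S \<in> cline v"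
  by (induction S rule: infinite_finite_induct) (auto intro: cline_add)

lemma cline_eq_imp: "cline u = cline w \<Longrightarrow> \<exists>c. w = c *s u"
  by (metis cline_self in_cline)

lemma cls_mem: "z \<in> cls v u \<longleftrightarrow> z - u \<in> cline v"
proof
  assume "z \<in> cls v u" then obtain c where "z = u + c *s v" by (auto simp: cls_def)
  then show "z - u \<in> cline v" by (simp add: in_cline)
next
  assume "z - u \<in> cline v" then obtain c where "z - u = c *s v" by (auto simp: in_cline)
  then have "z = u + c *s v" by (simp add: diff_eq_eq add.commute)
  then show "z \<in> cls v u" by (auto simp: cls_def)
qed

lemma cls_eq: "cls v u = cls v u' \<longleftrightarrow> u' - u \<in> cline v"
proof
  assume "cls v u = cls v u'"
  then have "u' \<in> cls v u" by (simp add: cls_mem)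
  then show "u' - u \<in> cline v" by (simp add: cls_mem)
next
  assume a: "u' - u \<in> cline v"
  show "cls v u = cls v u'"
  proof (auto simp: cls_mem)
    fix z assume "z - u \<in> cline v"
    from cline_diff[OF this a] show "z - u' \<in> cline v" by (simp add: algebra_simps)
  next
    fix z assume "z - u' \<in> cline v"
    from cline_add[OF this a] show "z - u \<in> cline v" by (simp add: algebra_simps)
  qed
qed

lemma cls_in_Vt[simp]: "cls v u \<in> Vt v"
  by (simp add: Vt_def)

definition pres :: "complex ^ 'm \<Rightarrow> 'm::finite cmat \<Rightarrow> bool" where
  "pres v a \<longleftrightarrow> a *v v \<in> cline v"

lemma pres_cline: "pres v a \<Longrightarrow> z \<in> cline v \<Longrightarrow> a *v z \<in> cline v"
  by (auto simp: pres_def in_cline mv_smult vector_smult_assoc)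

lemma theta_cls:
  assumes "pres v a"
  shows "theta v a (cls v u) = cls v (a *v u)"
proof -
  have "theta v a (cls v u) = {a *v u' + c *s v | u' c. u' \<in> cls v u}"
    by (simp add: theta_def)
  also have "\<dots> = cls v (a *v u)"
  proof (rule set_eqI, rule iffI)
    fix z assume "z \<in> {a *v u' + c *s v | u' c. u' \<in> cls v u}"
    then obtain u' c where z: "z = a *v u' + c *s v" and "u' - u \<in> cline v" by (auto simp: cls_mem)
    then have "a *v (u' - u) \<in> cline v" using pres_cline[OF assms] by blast
    then have "a *v u' - a *v u \<in> cline v" by (simp add: matrix_vector_mult_diff_distrib)
    from cline_add[OF this cline_smult[OF cline_self, of c]]
    have "a *v u' + c *s v - a *v u \<in> cline v" by (simp add: algebra_simps)
    then show "z \<in> cls v (a *v u)" by (simp add: z cls_mem)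
  next
    fix z assume "z \<in> cls v (a *v u)"
    then have "z - a *v u \<in> cline v" by (simp add: cls_mem)
    then obtain c where "z - a *v u = c *s v" by (auto simp: in_cline)
    then have "z = a *v u + c *s v" by (simp add: algebra_simps)
    then show "z \<in> {a *v u' + c *s v | u' c. u' \<in> cls v u}" by (auto simp: cls_mem)
  qed
  finally show ?thesis .
qed

lemma Vt_cases: "U \<in> Vt v \<Longrightarrow> (\<And>u. U = cls v u \<Longrightarrow> P) \<Longrightarrow> P"
  by (auto simp: Vt_def)

lemma theta_ext:
  assumes "\<And>u. f (cls v u) = g (cls v u)"
    and "\<And>U. U \<notin> Vt v \<Longrightarrow> f U = undefined" "\<And>U. U \<notin> Vt v \<Longrightarrow> g U = undefined"
  shows "f = g"
proof
  fix U show "f U = g U"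
    by (cases "U \<in> Vt v") (auto elim: Vt_cases simp: assms)
qed

lemma pres_add: "pres v a \<Longrightarrow> pres v b \<Longrightarrow> pres v (a + b)"
  by (simp add: pres_def matrix_vector_mult_add_rdistrib cline_add)
lemma pres_msc: "pres v a \<Longrightarrow> pres v (msc c a)"
  by (simp add: pres_def msc_mv cline_smult)
lemma pres_mult: "pres v a \<Longrightarrow> pres v b \<Longrightarrow> pres v (a ** b)"
  by (simp add: pres_def matrix_vector_mul_assoc[symmetric] pres_cline)
lemma pres_0: "pres v 0"
  by (simp add: pres_def)
lemma pres_1: "pres v (mat 1)"
  by (simp add: pres_def)
lemma pres_sum: "(\<And>k. k \<in> S \<Longrightarrow> pres v (f k)) \<Longrightarrow> pres v (sum f S)"
  by (induction S rule: infinite_finite_induct) (auto intro: pres_add pres_0)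

lemma cls_plus: "{x + y | x y. x \<in> cls v p \<and> y \<in> cls v q} = cls v (p + q)"
proof (rule set_eqI, rule iffI)
  fix z assume "z \<in> {x + y | x y. x \<in> cls v p \<and> y \<in> cls v q}"
  then obtain x y where "z = x + y" "x - p \<in> cline v" "y - q \<in> cline v" by (auto simp: cls_mem)
  then show "z \<in> cls v (p + q)" using cline_add[of "x - p" v "y - q"] by (simp add: cls_mem algebra_simps)
next
  fix z assume "z \<in> cls v (p + q)"
  then have "(z - q) - p \<in> cline v" by (simp add: cls_mem algebra_simps)
  moreover have "q - q \<in> cline v" by simp
  ultimately show "z \<in> {x + y | x y. x \<in> cls v p \<and> y \<in> cls v q}"
    unfolding cls_mem by (metis (mono_tags, lifting) diff_add_cancel mem_Collect_eq)
qed

lemma cls_scale: "{c *s x + d *s v | x d. x \<in> cls v p} = cls v (c *s p)"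
proof (rule set_eqI, rule iffI)
  fix z assume "z \<in> {c *s x + d *s v | x d. x \<in> cls v p}"
  then obtain x d where "z = c *s x + d *s v" "x - p \<in> cline v" by (auto simp: cls_mem)
  then show "z \<in> cls v (c *s p)" using cline_add[OF cline_smult[of "x - p" v c] cline_smult[OF cline_self, of d v]]
    by (simp add: cls_mem algebra_simps vector_ssub_ldistrib)
next
  fix z assume "z \<in> cls v (c *s p)"
  then obtain d where "z - c *s p = d *s v" by (auto simp: cls_mem in_cline)
  then have "z = c *s p + d *s v" by (simp add: algebra_simps)
  moreover have "p \<in> cls v p" by (simp add: cls_mem)
  ultimately show "z \<in> {c *s x + d *s v | x d. x \<in> cls v p}" by blast
qed

lemma theta_out: "U \<notin> Vt v \<Longrightarrow> theta v a U = undefined"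
  by (simp add: theta_def)

lemma theta_add: "pres v a \<Longrightarrow> pres v b \<Longrightarrow> theta v (a + b) = eadd v (theta v a) (theta v b)"
  by (rule theta_ext[where v=v])
     (simp_all add: eadd_def theta_out theta_cls pres_add cls_plus matrix_vector_mult_add_rdistrib)

lemma theta_msc: "pres v a \<Longrightarrow> theta v (msc c a) = esc v c (theta v a)"
proof (rule theta_ext[where v=v])
  fix u assume p: "pres v a"
  show "theta v (msc c a) (cls v u) = esc v c (theta v a) (cls v u)"
    unfolding esc_def using theta_cls[OF pres_msc[OF p]] theta_cls[OF p] cls_scale[of c v "a *v u"]
    by (simp add: msc_mv)
qed (simp_all add: esc_def theta_out)

lemma theta_mult: "pres v a \<Longrightarrow> pres v b \<Longrightarrow> theta v (a ** b) = ecomp v (theta v a) (theta v b)"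
  by (rule theta_ext[where v=v])
     (simp_all add: ecomp_def theta_out theta_cls pres_mult matrix_vector_mul_assoc)

lemma theta_0: "theta v 0 = ezero v"
  by (rule theta_ext[where v=v]) (simp_all add: ezero_def theta_out theta_cls pres_0)

lemma theta_zero_iff: "pres v a \<Longrightarrow> theta v a = ezero v \<longleftrightarrow> (\<forall>u. a *v u \<in> cline v)"
proof
  assume p: "pres v a" and "theta v a = ezero v"
  then have "cls v (a *v u) = cls v 0" for u
    using theta_cls[OF p, of u] fun_cong[OF \<open>theta v a = ezero v\<close>, of "cls v u"] by (simp add: ezero_def)
  then have "- (a *v u) \<in> cline v" for u by (simp add: cls_eq)
  then show "\<forall>u. a *v u \<in> cline v" by (metis cline_smult minus_minus vector_sneg_minus1)
next
  assume p: "pres v a" and "\<forall>u. a *v u \<in> cline v"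
  then have "- (a *v u) \<in> cline v" for u using cline_diff[OF cline_0, of "a *v u" v] by simp
  then show "theta v a = ezero v"
  proof (intro theta_ext[where v=v])
    fix u
    have "cls v (a *v u) = cls v 0" unfolding cls_eq using \<open>- (a *v u) \<in> cline v\<close> by simp
    then show "theta v a (cls v u) = ezero v (cls v u)" by (simp add: theta_cls[OF p] ezero_def)
  qed (simp_all add: ezero_def theta_out)
qed

lemma theta_eq_imp: "pres v a \<Longrightarrow> pres v b \<Longrightarrow> theta v a = theta v b \<Longrightarrow> (a - b) *v u \<in> cline v"
proof -
  assume p: "pres v a" "pres v b" and e: "theta v a = theta v b"
  have "cls v (a *v u) = cls v (b *v u)"
    using theta_cls[OF p(1), of u] theta_cls[OF p(2), of u] e by simp
  then have "b *v u - a *v u \<in> cline v" by (simp add: cls_eq)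
  from cline_diff[OF cline_0 this] have "a *v u - b *v u \<in> cline v" by simp
  then show ?thesis by (simp add: matrix_vector_mult_diff_rdistrib)
qed


lemma exp_trunc1:
  fixes M :: "'m::finite cmat"
  assumes "mpow M (Suc i) *v u = 0"
  shows "mpow M i *v (mexp M *v u) = mpow M i *v u"
proof -
  have z: "mpow M (k + i) *v u = 0" if "k \<ge> 1" for k
  proof -
    have e: "(k - 1) + Suc i = k + i" using that by simp
    have "mpow M (k + i) = mpow M (k - 1) ** mpow M (Suc i)"
      unfolding e[symmetric] by (rule mpow_add)
    then show ?thesis using assms by (simp add: matrix_vector_mul_assoc[symmetric] del: mpow.simps)
  qed
  have "mpow M i *v (mexp M *v u) = (\<Sum>k<CARD('m). if k = 0 then mpow M i *v u else 0)"
    unfolding mpow_mexp_mv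
  proof (rule sum.cong)
    fix k show "(1 / of_nat (fact k)) *s (mpow M (k + i) *v u) = (if k = 0 then mpow M i *v u else 0)"
      using z[of k] by (cases "k = 0") auto
  qed simp
  also have "\<dots> = mpow M i *v u" by simp
  finally show ?thesis .
qed

lemma exp_trunc2:
  fixes M :: "'m::finite cmat"
  assumes "mpow M (Suc (Suc i)) *v u = 0" "CARD('m) \<ge> 2"
  shows "mpow M i *v (mexp M *v u) = mpow M i *v u + mpow M (Suc i) *v u"
proof -
  have z: "mpow M (k + i) *v u = 0" if "k \<ge> 2" for k
  proof -
    have e: "(k - 2) + Suc (Suc i) = k + i" using that by simp
    have "mpow M (k + i) = mpow M (k - 2) ** mpow M (Suc (Suc i))"
      unfolding e[symmetric] by (rule mpow_add)
    then show ?thesis using assms by (simp add: matrix_vector_mul_assoc[symmetric] del: mpow.simps)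
  qed
  have "mpow M i *v (mexp M *v u) = (\<Sum>k<CARD('m). (if k = 0 then mpow M i *v u else 0) + (if k = 1 then mpow M (Suc i) *v u else 0))"
    unfolding mpow_mexp_mv
  proof (rule sum.cong)
    fix k show "(1 / of_nat (fact k)) *s (mpow M (k + i) *v u) = (if k = 0 then mpow M i *v u else 0) + (if k = 1 then mpow M (Suc i) *v u else 0)"
    proof (cases "k \<ge> 2")
      case True then show ?thesis using z[OF True] by simp
    next
      case False
      then have "k = 0 \<or> k = 1" by linarith
      then show ?thesis by (elim disjE) simp_all
    qed
  qed simp
  also have "\<dots> = mpow M i *v u + mpow M (Suc i) *v u" using assms(2) by (simp add: sum.distrib)
  finally show ?thesis .
qed

lemma unipotent_fix:
  fixes M :: "'m::{finite,wellorder} cmat"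
  assumes up: "strict_upper M" and e: "mexp M *v u = c *s u" and u: "u \<noteq> 0" and card: "CARD('m) \<ge> 2"
  shows "M *v u = 0"
proof -
  define P where "P j \<longleftrightarrow> mpow M j *v u = 0" for j
  have "P CARD('m)" using strict_upper_nilpotent[OF up] by (simp add: P_def)
  define j where "j = (LEAST j. P j)"
  have Pj: "P j" unfolding j_def by (rule LeastI) fact
  have nP: "\<not> P i" if "i < j" for i using that not_less_Least unfolding j_def by blast
  have j0: "j \<noteq> 0"
  proof
    assume "j = 0" then show False using Pj u by (simp add: P_def)
  qed
  then obtain i where ji: "j = Suc i" by (cases j) auto
  have ne: "mpow M i *v u \<noteq> 0" using nP[of i] ji by (simp add: P_def)
  have "mpow M i *v (mexp M *v u) = mpow M i *v u"
    using Pj ji by (intro exp_trunc1) (simp add: P_def)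
  then have "c *s (mpow M i *v u) = mpow M i *v u" by (simp add: e mv_smult)
  have "(c - 1) *s (mpow M i *v u) = c *s (mpow M i *v u) - mpow M i *v u" by (simp add: vector_sub_rdistrib)
  also have "\<dots> = 0" using \<open>c *s (mpow M i *v u) = mpow M i *v u\<close> by simp
  finally have "c - 1 = 0 \<or> mpow M i *v u = 0" by (simp only: vector_mul_eq_0)
  with ne have c1: "c = 1" by simp
  show ?thesis
  proof (cases i)
    case 0 then show ?thesis using Pj ji by (simp add: P_def)
  next
    case (Suc i')
    have "mpow M i' *v (mexp M *v u) = mpow M i' *v u + mpow M (Suc i') *v u"
      using Pj ji Suc card by (intro exp_trunc2) (simp_all add: P_def)
    then have "mpow M (Suc i') *v u = 0" by (simp add: e c1)
    then show ?thesis using ne Suc by simp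
  qed
qed

lemma smult_scaleR: fixes z :: "complex ^ 'm" shows "r *\<^sub>R z = (of_real r :: complex) *s z"
  by (simp add: vec_eq_iff) (simp add: scaleR_conv_of_real)

lemma cline_smult_eq: "c \<noteq> 0 \<Longrightarrow> cline (c *s u) = cline u"
  unfolding cline_eq
proof (rule set_eqI, rule iffI)
  fix z assume "c \<noteq> 0" "z \<in> range (\<lambda>k. k *s (c *s u))"
  then show "z \<in> range (\<lambda>k. k *s u)" by (auto simp: vector_smult_assoc)
next
  fix z assume c: "c \<noteq> 0" and "z \<in> range (\<lambda>k. k *s u)"
  then obtain k where "z = k *s u" by auto
  then have "z = (k / c) *s (c *s u)" using c by (simp add: vector_smult_assoc)
  then show "z \<in> range (\<lambda>k. k *s (c *s u))" by blast
qed

lemma subspace_cline: "subspace (cline (u :: complex ^ 'm::finite))"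
  unfolding subspace_def smult_scaleR using cline_add cline_smult by auto

lemma subspace_plane: "subspace {a *s (p :: complex ^ 'm::finite) + b *s q | a b. True}"
  unfolding subspace_def smult_scaleR
proof (intro conjI ballI allI)
  show "0 \<in> {a *s p + b *s q | a b. True}" by (auto intro!: exI[of _ 0])
next
  fix u v assume "u \<in> {a *s p + b *s q | a b. True}" "v \<in> {a *s p + b *s q | a b. True}"
  then obtain a b a' b' where "u = a *s p + b *s q" "v = a' *s p + b' *s q" by auto
  then have "u + v = (a + a') *s p + (b + b') *s q" by (simp add: vector_sadd_rdistrib algebra_simps)
  then show "u + v \<in> {a *s p + b *s q | a b. True}" by blast
next
  fix c u assume "u \<in> {a *s p + b *s q | a b. True}"
  then obtain a b where "u = a *s p + b *s q" by auto
  then have "(of_real c :: complex) *s u = (of_real c * a) *s p + (of_real c * b) *s q"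
    by (simp add: vector_add_ldistrib vector_smult_assoc)
  then show "(of_real c :: complex) *s u \<in> {a *s p + b *s q | a b. True}" by blast
qed


lemma sum_closed:
  assumes "0 \<in> K" "\<And>A B. A \<in> K \<Longrightarrow> B \<in> K \<Longrightarrow> A + B \<in> K" "\<And>k. k \<in> S \<Longrightarrow> f k \<in> K"
  shows "sum f S \<in> K"
  using assms(3) by (induction S rule: infinite_finite_induct) (auto intro: assms(1,2))

section \<open>Polynomial maps\<close>

lemma cpoly_Re: "polynomial_function (f :: 'a::real_normed_vector \<Rightarrow> complex) \<Longrightarrow> real_polynomial_function (\<lambda>x. Re (f x))"
  by (auto simp: polynomial_function_iff_Basis_inner Basis_complex_def inner_complex_def)
lemma cpoly_Im: "polynomial_function (f :: 'a::real_normed_vector \<Rightarrow> complex) \<Longrightarrow> real_polynomial_function (\<lambda>x. Im (f x))"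
  by (auto simp: polynomial_function_iff_Basis_inner Basis_complex_def inner_complex_def)

lemma cpoly_mult:
  fixes f g :: "'a::real_normed_vector \<Rightarrow> complex"
  assumes "polynomial_function f" "polynomial_function g"
  shows "polynomial_function (\<lambda>x. f x * g x)"
  using cpoly_Re[OF assms(1)] cpoly_Im[OF assms(1)] cpoly_Re[OF assms(2)] cpoly_Im[OF assms(2)]
  by (auto simp: polynomial_function_iff_Basis_inner Basis_complex_def inner_complex_def
      intro!: real_polynomial_function_diff real_polynomial_function.intros(3,4))

lemma vpoly:
  fixes F :: "'a::real_normed_vector \<Rightarrow> complex ^ 'n::finite"
  assumes "\<And>i. polynomial_function (\<lambda>z. F z $ i)"
  shows "polynomial_function F"
  using assms by (auto simp: polynomial_function_iff_Basis_inner Basis_vec_def inner_axis)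

lemma cpoly_nth: "polynomial_function (\<lambda>z :: complex ^ 'n::finite. z $ i)"
  by (rule polynomial_function_bounded_linear) (rule bounded_linear_vec_nth)

definition mpoly :: "('a::real_normed_vector \<Rightarrow> 'm::finite cmat) \<Rightarrow> bool" where
  "mpoly F \<longleftrightarrow> (\<forall>i j. polynomial_function (\<lambda>z. F z $ i $ j))"

lemma mpoly_const: "mpoly (\<lambda>z. A)"
  by (simp add: mpoly_def)
lemma mpoly_add: "mpoly F \<Longrightarrow> mpoly G \<Longrightarrow> mpoly (\<lambda>z. F z + G z)"
  by (auto simp: mpoly_def intro: polynomial_function_add)
lemma mpoly_msc: "polynomial_function c \<Longrightarrow> mpoly F \<Longrightarrow> mpoly (\<lambda>z. msc (c z) (F z))"
  by (auto simp: mpoly_def msc_def intro: cpoly_mult)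
lemma mpoly_sum: "finite S \<Longrightarrow> (\<And>k. k \<in> S \<Longrightarrow> mpoly (F k)) \<Longrightarrow> mpoly (\<lambda>z. \<Sum>k\<in>S. F k z)"
  unfolding mpoly_def by (auto simp: sum_component intro!: polynomial_function_sum)
lemma mpoly_mult: "mpoly F \<Longrightarrow> mpoly G \<Longrightarrow> mpoly (\<lambda>z. F z ** G z)"
  unfolding mpoly_def matrix_matrix_mult_def by (auto intro!: polynomial_function_sum cpoly_mult)
lemma mpoly_mpow: "mpoly F \<Longrightarrow> mpoly (\<lambda>z. mpow (F z) k)"
  by (induction k) (auto intro: mpoly_const mpoly_mult)
lemma mpoly_mexp: "mpoly F \<Longrightarrow> mpoly (\<lambda>z. mexp (F z))"
  unfolding mexp_def by (intro mpoly_sum mpoly_msc mpoly_mpow) auto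
lemma vpoly_mv: "mpoly F \<Longrightarrow> polynomial_function (\<lambda>z. F z *v u)"
  unfolding mpoly_def matrix_vector_mult_def
  by (intro vpoly) (auto intro!: polynomial_function_sum cpoly_mult)

lemma poly_nth: fixes F :: "'a::real_normed_vector \<Rightarrow> complex ^ 'n::finite"
  shows "polynomial_function F \<Longrightarrow> polynomial_function (\<lambda>z. F z $ i)"
proof -
  assume "polynomial_function F"
  from polynomial_function_compose[OF this cpoly_nth[of i]] show ?thesis by (simp add: o_def)
qed

lemma msc_sum_entry: "(\<Sum>k\<in>S. msc (c k) (G k)) $ i $ l = (\<Sum>k\<in>S. c k * G k $ i $ l)"
  by (simp add: sum_component msc_def)

lemma elim_identity:
  fixes ew d G :: "nat \<Rightarrow> complex"
  assumes "finite S" "j \<in> S" "d j \<noteq> 0"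
  shows "(\<Sum>k\<in>S. ew k * G k) - (\<Sum>k\<in>S-{j}. (ew k - ew j * d k / d j) * G k)
         = ew j / d j * (\<Sum>k\<in>S. d k * G k)"
proof -
  have "(\<Sum>k\<in>S-{j}. (ew k - ew j * d k / d j) * G k)
        = (\<Sum>k\<in>S-{j}. ew k * G k) - ew j / d j * (\<Sum>k\<in>S-{j}. d k * G k)"
    by (simp add: sum_subtractf[symmetric] sum_distrib_left algebra_simps)
  moreover have "(\<Sum>k\<in>S. ew k * G k) = ew j * G j + (\<Sum>k\<in>S-{j}. ew k * G k)"
    using assms by (simp add: sum.remove)
  moreover have "(\<Sum>k\<in>S. d k * G k) = d j * G j + (\<Sum>k\<in>S-{j}. d k * G k)"
    using assms by (simp add: sum.remove)
  ultimately show ?thesis using assms(3) by (simp add: field_simps)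
qed

locale HS =
  fixes n :: nat
    and x y :: "nat \<Rightarrow> ('m::{finite,wellorder}) cmat"
    and t :: "('m::{finite,wellorder}) cmat"
    and w h :: "('m::{finite,wellorder}) cmat set"
    and V' :: "(complex ^ ('m::{finite,wellorder})) set"
    and oh vh :: "complex ^ ('m::{finite,wellorder})"
  assumes n: "n \<ge> 1" and dimV: "CARD('m) = 2 * n + 2"
    and t_nz: "t \<noteq> 0"
    and upper: "strict_upper t" "\<And>i. i < n \<Longrightarrow> strict_upper (x i)"
        "\<And>i. i < n \<Longrightarrow> strict_upper (y i)"
    and br_xx: "\<And>i j. i < n \<Longrightarrow> j < n \<Longrightarrow> mbr (x i) (x j) = 0"
    and br_yy: "\<And>i j. i < n \<Longrightarrow> j < n \<Longrightarrow> mbr (y i) (y j) = 0"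
    and br_xy: "\<And>i j. i < n \<Longrightarrow> j < n \<Longrightarrow> mbr (x i) (y j) = (if i = j then t else 0)"
    and br_xt: "\<And>i. i < n \<Longrightarrow> mbr (x i) t = 0"
    and br_yt: "\<And>i. i < n \<Longrightarrow> mbr (y i) t = 0"
    and w_def: "w = {(\<Sum>i<n. msc (a i) (x i) + msc (b i) (y i)) | a b. True}"
    and h_def: "h = {X + msc c t | X c. X \<in> w}"
    and hyp: "vec.subspace V'" "vec.dim V' = CARD('m) - 1"
    and oh_nz: "oh \<noteq> 0"
    and orbit: "{cline (mexp X *v oh) | X. X \<in> h} = {cline u | u. u \<noteq> 0 \<and> u \<notin> V'}"
    and T_fix: "\<And>u. u \<in> V' \<Longrightarrow> u \<noteq> 0 \<Longrightarrow> cline (mexp t *v u) = cline u"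
    and vh_nz: "vh \<noteq> 0"
    and v_def: "pclosure {cline (mexp (msc s t) *v oh) | s. True}
                 - {cline (mexp (msc s t) *v oh) | s. True} = {cline vh}"
begin

lemma card2: "CARD('m) \<ge> 2" using dimV by simp

lemma w_closed:
  assumes "0 \<in> K" "\<And>A B. A \<in> K \<Longrightarrow> B \<in> K \<Longrightarrow> A + B \<in> K" "\<And>c A. A \<in> K \<Longrightarrow> msc c A \<in> K"
    "\<And>i. i < n \<Longrightarrow> x i \<in> K" "\<And>i. i < n \<Longrightarrow> y i \<in> K"
  shows "w \<subseteq> K"
proof
  fix X assume "X \<in> w"
  then obtain a b where X: "X = (\<Sum>i<n. msc (a i) (x i) + msc (b i) (y i))" by (auto simp: w_def)
  show "X \<in> K" unfolding X by (rule sum_closed) (auto intro: assms)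
qed

lemma h_closed:
  assumes "0 \<in> K" "\<And>A B. A \<in> K \<Longrightarrow> B \<in> K \<Longrightarrow> A + B \<in> K" "\<And>c A. A \<in> K \<Longrightarrow> msc c A \<in> K"
    "\<And>i. i < n \<Longrightarrow> x i \<in> K" "\<And>i. i < n \<Longrightarrow> y i \<in> K" "t \<in> K"
  shows "h \<subseteq> K"
proof
  fix X assume "X \<in> h"
  then obtain W c where X: "X = W + msc c t" "W \<in> w" by (auto simp: h_def)
  have "W \<in> K" using w_closed[of K] assms X(2) by blast
  then show "X \<in> K" unfolding X using assms by blast
qed

lemma zero_w: "0 \<in> w"
proof -
  show ?thesis unfolding w_def by (rule CollectI, rule exI[of _ "\<lambda>_. 0"], rule exI[of _ "\<lambda>_. 0"]) simp
qed

lemma w_h: "X \<in> w \<Longrightarrow> X \<in> h"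
  unfolding h_def by (rule CollectI, rule exI[of _ X], rule exI[of _ 0]) simp

lemma t_h: "t \<in> h"
  unfolding h_def using zero_w by (intro CollectI exI[of _ 0] exI[of _ 1]) simp

lemma zero_h: "0 \<in> h" using w_h zero_w by blast

lemma h_upper: "X \<in> h \<Longrightarrow> strict_upper X"
  using h_closed[of "Collect strict_upper"] upper strict_upper_0 strict_upper_add strict_upper_msc by blast

lemma V'0: "0 \<in> V'" using hyp(1) by (rule vec.subspace_0)

lemma oh_notin: "oh \<notin> V'"
proof
  assume oh: "oh \<in> V'"
  have "mexp 0 = (mat 1 :: 'm cmat)" using mexp_sq0[of "0::'m cmat"] card2 by simp
  then have "cline oh \<in> {cline (mexp X *v oh) | X. X \<in> h}" using zero_h by force
  then obtain u where u: "cline oh = cline u" "u \<noteq> 0" "u \<notin> V'" using orbit by auto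
  obtain c where "u = c *s oh" using cline_eq_imp[OF u(1)] by blast
  then have "u \<in> V'" using oh hyp(1) by (simp add: vec.subspace_scale)
  then show False using u by simp
qed

lemma decomp: "\<exists>\<alpha>. u - \<alpha> *s oh \<in> V'"
proof -
  have sp: "vec.span V' = V'" using hyp(1) by (simp add: vec.span_eq_iff)
  have "vec.dim (insert oh V') = vec.dim V' + 1"
    using oh_notin by (simp add: vec.dim_insert sp)
  also have "\<dots> = CARD('m)" using hyp(2) dimV by simp
  also have "\<dots> = vec.dim (UNIV :: (complex ^ ('m::{finite,wellorder})) set)" by (simp add: card_cart_basis)
  finally have "UNIV \<subseteq> vec.span (insert oh V')" using vec.dim_eq_span[of "insert oh V'" UNIV] by simp
  then have "u \<in> vec.span (insert oh V')" by auto
  then show ?thesis by (simp add: vec.span_insert sp)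
qed

lemma t_V': "u \<in> V' \<Longrightarrow> t *v u = 0"
proof (cases "u = 0")
  case False
  assume u: "u \<in> V'"
  obtain c where "mexp t *v u = c *s u" using cline_eq_imp[OF T_fix[OF u False, symmetric]] by blast
  then show ?thesis using unipotent_fix[OF upper(1) _ False card2] by blast
qed simp

definition T0 where "T0 = t *v oh"

lemma t_act: "\<exists>\<alpha>. t *v u = \<alpha> *s T0"
proof -
  obtain \<alpha> where "u - \<alpha> *s oh \<in> V'" using decomp by blast
  then have "t *v (u - \<alpha> *s oh) = 0" by (rule t_V')
  then have "t *v u = \<alpha> *s T0" by (simp add: T0_def matrix_vector_mult_diff_distrib mv_smult)
  then show ?thesis by blast
qed

lemma tT0: "t *v T0 = 0"
proof (cases "T0 = 0")
  case False
  obtain \<beta> where b: "t *v T0 = \<beta> *s T0" using t_act by blast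
  then have "\<beta> = 0" using nil_eigen[OF upper(1) b False] by simp
  then show ?thesis using b by simp
qed simp

lemma tt: "t ** t = 0"
proof -
  have "(t ** t) *v u = 0 *v u" for u
  proof -
    obtain \<alpha> where "t *v u = \<alpha> *s T0" using t_act by blast
    then show ?thesis by (simp add: matrix_vector_mul_assoc[symmetric] mv_smult tT0)
  qed
  then show ?thesis by (simp add: matrix_eq)
qed

lemma exp_st: "mexp (msc s t) *v oh = oh + s *s T0"
proof -
  have "msc s t ** msc s t = 0" by (simp add: msc_mult_left msc_mult_right tt)
  then show ?thesis using mexp_sq0[OF _ card2] by (simp add: matrix_vector_mult_add_rdistrib msc_mv T0_def)
qed

lemma S_eq: "{cline (mexp (msc s t) *v oh) | s. True} = {cline (oh + s *s T0) | s. True}"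
  by (simp add: exp_st)

lemma T0_nz: "T0 \<noteq> 0"
proof
  assume T: "T0 = 0"
  let ?S = "{cline (oh + s *s T0) | s. True}"
  have S: "?S = {cline oh}" using T by auto
  have sub: "pclosure ?S \<subseteq> ?S"
  proof
    fix L assume "L \<in> pclosure ?S"
    then obtain u where u: "L = cline u" "u \<noteq> 0" "u \<in> closure (cline oh)"
      unfolding pclosure_def S by auto
    have "closure (cline oh) = cline oh"
      using subspace_cline closed_subspace closure_closed by blast
    then obtain c where "u = c *s oh" using u(3) by (auto simp: in_cline)
    moreover have "c \<noteq> 0" using u(2) calculation by auto
    ultimately have "L = cline oh" using u(1) cline_smult_eq by simp
    then show "L \<in> ?S" using S by simp
  qed
  have eq: "pclosure ?S - ?S = {cline vh}" using v_def S_eq by simp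
  show False using sub eq by blast
qed

lemma T0_vh: "T0 \<in> cline vh"
proof -
  let ?S = "{cline (oh + s *s T0) | s. True}"
  have "cline vh \<in> pclosure ?S" "cline vh \<notin> ?S" using v_def S_eq by auto
  then obtain u where u: "cline vh = cline u" "u \<noteq> 0" "u \<in> closure (\<Union> ?S)"
    unfolding pclosure_def by auto
  let ?P = "{a *s oh + b *s T0 | a b. True}"
  have "\<Union> ?S \<subseteq> ?P"
  proof
    fix z assume "z \<in> \<Union> ?S"
    then obtain s where "z \<in> cline (oh + s *s T0)" by auto
    then obtain k where "z = k *s (oh + s *s T0)" by (auto simp: in_cline)
    then have "z = k *s oh + (k * s) *s T0" by (simp add: vector_add_ldistrib vector_smult_assoc)
    then show "z \<in> ?P" by blast
  qed
  then have "closure (\<Union> ?S) \<subseteq> ?P"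
    using closure_minimal closed_subspace subspace_plane by blast
  then obtain a b where ab: "u = a *s oh + b *s T0" using u(3) by blast
  have a0: "a = 0"
  proof (rule ccontr)
    assume a: "a \<noteq> 0"
    have u2: "u = a *s (oh + (b / a) *s T0)" using a ab by (simp add: vector_add_ldistrib vector_smult_assoc)
    have "cline u = cline (oh + (b / a) *s T0)" unfolding u2 by (rule cline_smult_eq[OF a])
    then have "cline vh \<in> ?S" using u(1) by auto
    then show False using \<open>cline vh \<notin> ?S\<close> by simp
  qed
  then have "u = b *s T0" using ab by simp
  moreover have "b \<noteq> 0" using u(2) calculation by auto
  ultimately have "cline vh = cline T0" using u(1) cline_smult_eq by simp
  then show ?thesis by simp
qed

lemma t_L: "t *v u \<in> cline vh"
proof -
  obtain \<alpha> where "t *v u = \<alpha> *s T0" using t_act by blast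
  then show ?thesis using cline_smult[OF T0_vh] by simp
qed

definition Lm :: "'m cmat \<Rightarrow> bool" where
  "Lm M \<longleftrightarrow> (\<forall>u. M *v u \<in> cline vh)"

lemma Lm_add: "Lm A \<Longrightarrow> Lm B \<Longrightarrow> Lm (A + B)"
  by (simp add: Lm_def matrix_vector_mult_add_rdistrib cline_add)
lemma Lm_msc: "Lm A \<Longrightarrow> Lm (msc c A)"
  by (simp add: Lm_def msc_mv cline_smult)
lemma Lm_0: "Lm 0"
  by (simp add: Lm_def)
lemma Lm_t: "Lm t"
  by (simp add: Lm_def t_L)
lemma Lm_mult_left: "Lm A \<Longrightarrow> Lm (A ** B)"
  by (simp add: Lm_def matrix_vector_mul_assoc[symmetric])
lemma Lm_mult_right: "pres vh B \<Longrightarrow> Lm A \<Longrightarrow> Lm (B ** A)"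
  by (simp add: Lm_def matrix_vector_mul_assoc[symmetric] pres_cline)
lemma Lm_sum: "(\<And>k. k \<in> S \<Longrightarrow> Lm (f k)) \<Longrightarrow> Lm (sum f S)"
  by (induction S rule: infinite_finite_induct) (auto intro: Lm_add Lm_0)
lemma Lm_swap: "Lm (mbr A B) \<Longrightarrow> Lm (mbr B A)"
  by (subst mbr_swap) (rule Lm_msc)

definition Gn :: "'m cmat set" where
  "Gn = {x i | i. i < n} \<union> {y i | i. i < n} \<union> {t}"

lemma Gn_br: "g \<in> Gn \<Longrightarrow> g' \<in> Gn \<Longrightarrow> Lm (mbr g g')"
proof -
  have xy: "Lm (mbr (x i) (y j))" if "i < n" "j < n" for i j
    using br_xy[OF that] Lm_t Lm_0 by simp
  have xx: "Lm (mbr (x i) (x j))" if "i < n" "j < n" for i j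
    using br_xx[OF that] Lm_0 by simp
  have yy: "Lm (mbr (y i) (y j))" if "i < n" "j < n" for i j
    using br_yy[OF that] Lm_0 by simp
  have xt: "Lm (mbr (x i) t)" if "i < n" for i
    using br_xt[OF that] Lm_0 by simp
  have yt: "Lm (mbr (y i) t)" if "i < n" for i
    using br_yt[OF that] Lm_0 by simp
  have tt': "Lm (mbr t t)" using Lm_0 by simp
  assume "g \<in> Gn" "g' \<in> Gn"
  then show ?thesis unfolding Gn_def
    using xy xx yy xt yt tt' Lm_swap by auto
qed

lemma Gn_h_closed:
  assumes "0 \<in> K" "\<And>A B. A \<in> K \<Longrightarrow> B \<in> K \<Longrightarrow> A + B \<in> K" "\<And>c A. A \<in> K \<Longrightarrow> msc c A \<in> K"
    "Gn \<subseteq> K"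
  shows "h \<subseteq> K"
  using assms by (intro h_closed) (auto simp: Gn_def)

lemma br_h1: "g \<in> Gn \<Longrightarrow> Y \<in> h \<Longrightarrow> Lm (mbr g Y)"
  using Gn_h_closed[of "{Y. Lm (mbr g Y)}"] Gn_br Lm_0 Lm_add Lm_msc
  by (auto simp: mbr_add2 mbr_msc2)

lemma br_h: "X \<in> h \<Longrightarrow> Y \<in> h \<Longrightarrow> Lm (mbr X Y)"
  using Gn_h_closed[of "{X. \<forall>Y\<in>h. Lm (mbr X Y)}"] br_h1 Lm_0 Lm_add Lm_msc
  by (auto simp: mbr_add mbr_msc)

lemma vh_T0: "\<exists>c. vh = c *s T0"
proof -
  obtain c where c: "T0 = c *s vh" using T0_vh by (auto simp: in_cline)
  then have "c \<noteq> 0" using T0_nz by auto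
  then have "vh = (1 / c) *s T0" using c by (simp add: vector_smult_assoc)
  then show ?thesis by blast
qed

lemma pres_h: "X \<in> h \<Longrightarrow> pres vh X"
proof -
  assume X: "X \<in> h"
  obtain c where c: "vh = c *s T0" using vh_T0 by blast
  have "X *v T0 = t *v (X *v oh) + mbr X t *v oh"
    by (simp add: T0_def mbr_def matrix_vector_mul_assoc matrix_vector_mult_diff_rdistrib)
  also have "\<dots> \<in> cline vh"
    using t_L br_h[OF X t_h] by (intro cline_add) (auto simp: Lm_def)
  finally have "X *v T0 \<in> cline vh" .
  then show ?thesis unfolding pres_def c by (simp add: mv_smult cline_smult)
qed

lemma Xvh: "X \<in> h \<Longrightarrow> X *v vh = 0"
proof -
  assume X: "X \<in> h"
  obtain \<mu> where m: "X *v vh = \<mu> *s vh" using pres_h[OF X] by (auto simp: pres_def in_cline)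
  then have "\<mu> = 0" using nil_eigen[OF h_upper[OF X] m vh_nz] by simp
  then show ?thesis using m by simp
qed

definition Gexp :: "'m cmat set" where
  "Gexp = {msc c (mexp X) | c X. c \<noteq> 0 \<and> X \<in> h}"

definition Cset :: "'m cmat set \<Rightarrow> 'm cmat set" where
  "Cset Q = {M. pres vh M \<and> (\<forall>N\<in>Q. Lm (mbr M N))}"

lemma Cset_0: "0 \<in> Cset Q"
  by (simp add: Cset_def pres_0 Lm_0)
lemma Cset_1: "mat 1 \<in> Cset Q"
  by (simp add: Cset_def pres_1 Lm_0)
lemma Cset_add: "A \<in> Cset Q \<Longrightarrow> B \<in> Cset Q \<Longrightarrow> A + B \<in> Cset Q"
  by (simp add: Cset_def pres_add Lm_add mbr_add)
lemma Cset_msc: "A \<in> Cset Q \<Longrightarrow> msc c A \<in> Cset Q"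
  by (simp add: Cset_def pres_msc Lm_msc mbr_msc)
lemma Cset_mult: "A \<in> Cset Q \<Longrightarrow> B \<in> Cset Q \<Longrightarrow> A ** B \<in> Cset Q"
  by (simp add: Cset_def pres_mult Lm_add mbr_mult Lm_mult_left Lm_mult_right)
lemma Cset_mpow: "A \<in> Cset Q \<Longrightarrow> mpow A k \<in> Cset Q"
  by (induction k) (auto intro: Cset_1 Cset_mult)
lemma Cset_sum: "(\<And>k. k \<in> S \<Longrightarrow> f k \<in> Cset Q) \<Longrightarrow> sum f S \<in> Cset Q"
  by (rule sum_closed) (auto intro: Cset_0 Cset_add)
lemma Cset_mexp: "A \<in> Cset Q \<Longrightarrow> mexp A \<in> Cset Q"
  unfolding mexp_def by (intro Cset_sum Cset_msc Cset_mpow)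

lemma Cset_ualg: assumes "h \<subseteq> Cset Q" shows "ualg Gexp \<subseteq> Cset Q"
proof
  fix a assume "a \<in> ualg Gexp"
  then show "a \<in> Cset Q"
  proof (induction rule: ualg.induct)
    case (gen x)
    then show ?case using assms by (auto simp: Gexp_def intro!: Cset_msc Cset_mexp)
  qed (auto intro: Cset_0 Cset_1 Cset_add Cset_msc Cset_mult)
qed

lemma h_Cset1: "h \<subseteq> Cset h"
  using pres_h br_h by (auto simp: Cset_def)

lemma h_Cset2: "h \<subseteq> Cset (Cset h)"
  using pres_h by (auto simp: Cset_def intro: Lm_swap)

lemma Cset_mem: "a \<in> Cset Q \<Longrightarrow> N \<in> Q \<Longrightarrow> Lm (mbr a N)"
  by (simp add: Cset_def)

lemma ualg_comm: "a \<in> ualg Gexp \<Longrightarrow> b \<in> ualg Gexp \<Longrightarrow> Lm (mbr a b)"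
proof -
  assume a: "a \<in> ualg Gexp" and b: "b \<in> ualg Gexp"
  have "b \<in> Cset h" using Cset_ualg[OF h_Cset1] b by blast
  moreover have "a \<in> Cset (Cset h)" using Cset_ualg[OF h_Cset2] a by blast
  ultimately show ?thesis using Cset_mem by blast
qed

lemma ualg_pres: "a \<in> ualg Gexp \<Longrightarrow> pres vh a"
  using Cset_ualg[OF h_Cset1] by (auto simp: Cset_def)

lemma cyclic: "\<exists>b \<in> ualg Gexp. u = b *v oh"
proof -
  have out: "\<exists>b \<in> ualg Gexp. u = b *v oh" if u: "u \<notin> V'" for u
  proof -
    have "u \<noteq> 0" using u V'0 by auto
    then have "cline u \<in> {cline (mexp X *v oh) | X. X \<in> h}" using orbit u by blast
    then obtain X where X: "X \<in> h" "cline u = cline (mexp X *v oh)" by auto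
    obtain c where c: "u = c *s (mexp X *v oh)" using cline_eq_imp[OF X(2)[symmetric]] by blast
    then have "c \<noteq> 0" using \<open>u \<noteq> 0\<close> by auto
    then have "msc c (mexp X) \<in> ualg Gexp" using X(1) by (auto simp: Gexp_def intro!: ualg.gen)
    moreover have "u = msc c (mexp X) *v oh" using c by (simp add: msc_mv)
    ultimately show ?thesis by blast
  qed
  show ?thesis
  proof (cases "u \<in> V'")
    case True
    have "u + oh \<notin> V'"
    proof
      assume "u + oh \<in> V'"
      then have "(u + oh) - u \<in> V'" using True hyp(1) by (intro vec.subspace_diff) auto
      then show False using oh_notin by simp
    qed
    then obtain b1 where b1: "b1 \<in> ualg Gexp" "u + oh = b1 *v oh" using out by blast
    obtain b2 where b2: "b2 \<in> ualg Gexp" "oh = b2 *v oh" using out oh_notin by blast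
    have "b1 + msc (-1) b2 \<in> ualg Gexp" using b1 b2 by (intro ualg.add ualg.sc)
    moreover have "u = (b1 + msc (-1) b2) *v oh"
      using b1(2) b2(2) by (simp add: matrix_vector_mult_add_rdistrib msc_mv algebra_simps)
    ultimately show ?thesis by blast
  qed (rule out)
qed

lemma part4: "a \<in> ualg Gexp \<Longrightarrow> a *v oh = 0 \<Longrightarrow> theta vh a = ezero vh"
proof -
  assume a: "a \<in> ualg Gexp" and a0: "a *v oh = 0"
  have "a *v u \<in> cline vh" for u
  proof -
    obtain b where b: "b \<in> ualg Gexp" "u = b *v oh" using cyclic by blast
    have "a *v u = (b ** a + mbr a b) *v oh" by (simp add: b(2) mbr_def matrix_vector_mul_assoc)
    also have "\<dots> = mbr a b *v oh" by (simp add: matrix_vector_mult_add_rdistrib matrix_vector_mul_assoc[symmetric] a0)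
    also have "\<dots> \<in> cline vh" using ualg_comm[OF a b(1)] by (simp add: Lm_def)
    finally show ?thesis .
  qed
  then show ?thesis using theta_zero_iff[OF ualg_pres[OF a]] by simp
qed

lemma part1: "theta vh t = ezero vh"
  using theta_zero_iff[OF pres_h[OF t_h]] t_L by simp

lemma theta_eq_diff: "pres v a \<Longrightarrow> pres v b \<Longrightarrow> (\<And>u. (a - b) *v u \<in> cline v) \<Longrightarrow> theta v a = theta v b"
proof (rule theta_ext[where v=v])
  fix u assume p: "pres v a" "pres v b" and d: "\<And>u. (a - b) *v u \<in> cline v"
  have "a *v u - b *v u \<in> cline v" using d[of u] by (simp add: matrix_vector_mult_diff_rdistrib)
  from cline_diff[OF cline_0 this] have "b *v u - a *v u \<in> cline v" by simp
  then show "theta v a (cls v u) = theta v b (cls v u)" by (simp add: theta_cls[OF p(1)] theta_cls[OF p(2)] cls_eq)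
qed (simp_all add: theta_out)

lemma alg_pres: "a \<in> alg h \<Longrightarrow> pres vh a"
  by (induction rule: alg.induct) (auto intro: pres_h pres_0 pres_add pres_msc pres_mult)

lemma part3: "theta vh ` alg h = ealg vh (theta vh ` w)"
proof
  show "theta vh ` alg h \<subseteq> ealg vh (theta vh ` w)"
  proof
    fix f assume "f \<in> theta vh ` alg h"
    then obtain a where a: "a \<in> alg h" "f = theta vh a" by auto
    have "theta vh a \<in> ealg vh (theta vh ` w)" using a(1)
    proof (induction rule: alg.induct)
      case (gen X)
      then obtain W c where X: "X = W + msc c t" "W \<in> w" by (auto simp: h_def)
      have "theta vh X = theta vh W"
      proof (rule theta_eq_diff)
        show "pres vh X" "pres vh W" using gen X(2) w_h pres_h by auto
        show "(X - W) *v u \<in> cline vh" for u using t_L by (simp add: X(1) msc_mv cline_smult)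
      qed
      then show ?case using X(2) by (auto intro: ealg.gen)
    next
      case zero then show ?case by (simp add: theta_0 ealg.zero)
    next
      case (add a b) then show ?case by (simp add: theta_add alg_pres ealg.add)
    next
      case (sc a c) then show ?case by (simp add: theta_msc alg_pres ealg.sc)
    next
      case (mul a b) then show ?case by (simp add: theta_mult alg_pres ealg.mul)
    qed
    then show "f \<in> ealg vh (theta vh ` w)" using a by simp
  qed
next
  show "ealg vh (theta vh ` w) \<subseteq> theta vh ` alg h"
  proof
    fix f assume "f \<in> ealg vh (theta vh ` w)"
    then show "f \<in> theta vh ` alg h"
    proof (induction rule: ealg.induct)
      case (gen f) then show ?case using w_h by (auto intro: alg.gen)
    next
      case zero then show ?case using theta_0 alg.zero by (metis image_eqI)
    next
      case (add f g)
      then obtain a b where ab: "a \<in> alg h" "b \<in> alg h" "f = theta vh a" "g = theta vh b" by auto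
      then have "eadd vh f g = theta vh (a + b)" by (simp add: theta_add alg_pres)
      then show ?case using ab alg.add by blast
    next
      case (sc f c)
      then obtain a where ab: "a \<in> alg h" "f = theta vh a" by auto
      then have "esc vh c f = theta vh (msc c a)" by (simp add: theta_msc alg_pres)
      then show ?case using ab alg.sc by blast
    next
      case (mul f g)
      then obtain a b where ab: "a \<in> alg h" "b \<in> alg h" "f = theta vh a" "g = theta vh b" by auto
      then have "ecomp vh f g = theta vh (a ** b)" by (simp add: theta_mult alg_pres)
      then show ?case using ab alg.mul by blast
    qed
  qed
qed

lemma w_diff: "A \<in> w \<Longrightarrow> B \<in> w \<Longrightarrow> A - B \<in> w"
proof -
  assume "A \<in> w" "B \<in> w"
  then obtain a b a' b' where A: "A = (\<Sum>i<n. msc (a i) (x i) + msc (b i) (y i))"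
    and B: "B = (\<Sum>i<n. msc (a' i) (x i) + msc (b' i) (y i))" by (auto simp: w_def)
  have eq: "A - B = (\<Sum>i<n. msc ((\<lambda>i. a i - a' i) i) (x i) + msc ((\<lambda>i. b i - b' i) i) (y i))"
    unfolding A B sum_subtractf[symmetric]
    by (rule sum.cong) (auto simp: msc_def vec_eq_iff algebra_simps)
  show ?thesis unfolding w_def
    by (rule CollectI, rule exI[of _ "\<lambda>i. a i - a' i"], rule exI[of _ "\<lambda>i. b i - b' i"]) (use eq in simp)
qed

definition g :: "nat \<Rightarrow> 'm cmat" where
  "g k = (if k < n then x k else y (k - n))"

lemma w_alt: "X \<in> w \<Longrightarrow> \<exists>c. X = (\<Sum>k<2*n. msc (c k) (g k))"
proof -
  assume "X \<in> w"
  then obtain a b where X: "X = (\<Sum>i<n. msc (a i) (x i) + msc (b i) (y i))" by (auto simp: w_def)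
  define c where "c k = (if k < n then a k else b (k - n))" for k
  have U: "{..<2*n} = {..<n} \<union> {n..<2*n}" by auto
  have "(\<Sum>k<2*n. msc (c k) (g k)) = (\<Sum>k<n. msc (c k) (g k)) + (\<Sum>k\<in>{n..<2*n}. msc (c k) (g k))"
    unfolding U by (rule sum.union_disjoint) auto
  also have "(\<Sum>k\<in>{n..<2*n}. msc (c k) (g k)) = (\<Sum>i<n. msc (c (i + n)) (g (i + n)))"
    by (rule sum.reindex_bij_witness[of _ "\<lambda>i. i + n" "\<lambda>k. k - n"]) auto
  also have "\<dots> = (\<Sum>i<n. msc (b i) (y i))" by (simp add: c_def g_def)
  also have "(\<Sum>k<n. msc (c k) (g k)) = (\<Sum>i<n. msc (a i) (x i))" by (simp add: c_def g_def)
  finally have "(\<Sum>k<2*n. msc (c k) (g k)) = X" unfolding X by (simp add: sum.distrib)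
  then show ?thesis by metis
qed

lemma pert:
  assumes X: "X \<in> h" and L: "Lm (X - X0)"
  shows "mexp X *v u - mexp X0 *v u \<in> cline vh"
proof -
  have P: "mpow X k *v u - mpow X0 k *v u \<in> cline vh" for k
  proof (induction k)
    case 0 then show ?case by simp
  next
    case (Suc k)
    obtain \<beta> where b: "mpow X k *v u - mpow X0 k *v u = \<beta> *s vh" using Suc by (auto simp: in_cline)
    have "mpow X (Suc k) *v u - mpow X0 (Suc k) *v u
          = X *v (mpow X k *v u - mpow X0 k *v u) + (X - X0) *v (mpow X0 k *v u)"
      by (simp add: matrix_vector_mul_assoc[symmetric] matrix_vector_mult_diff_distrib matrix_vector_mult_diff_rdistrib)
    also have "X *v (mpow X k *v u - mpow X0 k *v u) = 0" by (simp add: b mv_smult Xvh[OF X])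
    finally show ?case using L by (simp add: Lm_def)
  qed
  have "mexp X *v u - mexp X0 *v u = (\<Sum>k<CARD('m). (1 / of_nat (fact k)) *s (mpow X k *v u - mpow X0 k *v u))"
    by (simp add: mexp_mv sum_subtractf[symmetric] vector_ssub_ldistrib)
  also have "\<dots> \<in> cline vh" by (intro cline_sum cline_smult P)
  finally show ?thesis .
qed

lemma negV': "negligible V'"
proof (rule negligible_lowdim)
  have sub: "subspace V'"
    unfolding subspace_def smult_scaleR using V'0 hyp(1) by (auto intro: vec.subspace_add vec.subspace_scale)
  have VU: "V' \<noteq> UNIV" using oh_notin by auto
  have spV: "span V' = V'" using sub by (metis span_eq_iff)
  have "span V' \<noteq> UNIV" unfolding spV by (rule VU)
  then have "dim V' \<noteq> DIM(complex ^ ('m::{finite,wellorder}))" using dim_eq_full[of V'] by blast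
  moreover have "dim V' \<le> DIM(complex ^ ('m::{finite,wellorder}))" by (rule dim_subset_UNIV)
  ultimately show "dim V' < DIM(complex ^ ('m::{finite,wellorder}))" by simp
qed

lemma F5: "D \<in> w \<Longrightarrow> (\<And>u. D *v u \<in> cline vh) \<Longrightarrow> D = 0"
proof (rule ccontr)
  assume D: "D \<in> w" and DL: "\<And>u. D *v u \<in> cline vh" and Dnz: "D \<noteq> 0"
  obtain d where Dd: "D = (\<Sum>k<2*n. msc (d k) (g k))" using w_alt[OF D] by blast
  obtain j where j: "j < 2*n" "d j \<noteq> 0"
  proof (rule ccontr)
    assume "\<not> thesis"
    then have "\<forall>k<2*n. d k = 0" using that by blast
    then have "D = 0" unfolding Dd by simp
    then show False using Dnz by simp
  qed
  define K where "K = {..<2*n} - {j}"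
  have finK: "finite K" by (simp add: K_def)
  have K2: "k \<in> K \<Longrightarrow> k < 2*n" for k by (simp add: K_def)
  have LD: "Lm D" using DL by (simp add: Lm_def)
  have key: "\<exists>e \<mu>. mexp X *v oh = mexp (\<Sum>k\<in>K. msc (e k) (g k)) *v oh + \<mu> *s vh" if X: "X \<in> h" for X
  proof -
    obtain W c' where XW: "X = W + msc c' t" "W \<in> w" using X by (auto simp: h_def)
    obtain ew where W: "W = (\<Sum>k<2*n. msc (ew k) (g k))" using w_alt[OF XW(2)] by blast
    define e where "e k = ew k - ew j * d k / d j" for k
    define X0 where "X0 = (\<Sum>k\<in>K. msc (e k) (g k))"
    have "W - X0 = msc (ew j / d j) D"
    proof -
      have "(W - X0) $ i $ l = msc (ew j / d j) D $ i $ l" for i l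
      proof -
        have "(W - X0) $ i $ l = (\<Sum>k<2*n. ew k * g k $ i $ l) - (\<Sum>k\<in>{..<2*n}-{j}. (ew k - ew j * d k / d j) * g k $ i $ l)"
          by (simp add: W X0_def msc_sum_entry e_def K_def msc_def)
        also have "\<dots> = ew j / d j * (\<Sum>k<2*n. d k * g k $ i $ l)"
          using j by (intro elim_identity) auto
        also have "\<dots> = msc (ew j / d j) D $ i $ l" by (simp add: Dd msc_sum_entry msc_def)
        finally show ?thesis .
      qed
      then show ?thesis by (simp add: vec_eq_iff)
    qed
    then have "X - X0 = msc (ew j / d j) D + msc c' t" using XW(1) by (simp add: algebra_simps)
    then have "Lm (X - X0)" using LD Lm_t by (simp add: Lm_add Lm_msc)
    from pert[OF X this] obtain \<mu> where "mexp X *v oh - mexp X0 *v oh = \<mu> *s vh" by (auto simp: in_cline)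
    then have "mexp X *v oh = mexp X0 *v oh + \<mu> *s vh" by (simp add: algebra_simps)
    then show ?thesis unfolding X0_def by blast
  qed
  obtain \<iota> :: "nat \<Rightarrow> ('m::{finite,wellorder})" where bij: "bij_betw \<iota> {..<2*n+2} UNIV"
    using ex_bij_betw_nat_finite[of "UNIV :: ('m::{finite,wellorder}) set"] dimV by (auto simp: atLeast0LessThan)
  define f where "f z = (z $ \<iota> (2*n)) *s (mexp (\<Sum>k\<in>K. msc (z $ \<iota> k) (g k)) *v oh) + (z $ \<iota> (2*n+1)) *s vh"
    for z :: "complex ^ ('m::{finite,wellorder})"
  define S where "S = {z :: complex ^ ('m::{finite,wellorder}). z $ \<iota> j = 0}"
  have cover: "UNIV - V' \<subseteq> f ` S"
  proof
    fix u assume "u \<in> UNIV - V'"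
    then have u: "u \<notin> V'" by simp
    have "u \<noteq> 0" using u V'0 by auto
    then have "cline u \<in> {cline (mexp X *v oh) | X. X \<in> h}" using orbit u by blast
    then obtain X where X: "X \<in> h" "cline u = cline (mexp X *v oh)" by auto
    obtain c where c: "u = c *s (mexp X *v oh)" using cline_eq_imp[OF X(2)[symmetric]] by blast
    obtain e \<mu> where em: "mexp X *v oh = mexp (\<Sum>k\<in>K. msc (e k) (g k)) *v oh + \<mu> *s vh"
      using key[OF X(1)] by blast
    define z where "z = (\<chi> i. let k = inv_into {..<2*n+2} \<iota> i in
                     if k \<in> K then e k else if k = 2*n then c else if k = 2*n+1 then c * \<mu> else 0)"
    have zi: "z $ \<iota> k = (if k \<in> K then e k else if k = 2*n then c else if k = 2*n+1 then c * \<mu> else 0)"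
      if "k < 2*n+2" for k
    proof -
      have "inv_into {..<2*n+2} \<iota> (\<iota> k) = k" using bij_betw_inv_into_left[OF bij] that by simp
      then show ?thesis by (simp only: z_def vec_lambda_beta Let_def)
    qed
    have zS: "z \<in> S" using zi[of j] j(1) by (simp add: S_def K_def)
    have "(\<Sum>k\<in>K. msc (z $ \<iota> k) (g k)) = (\<Sum>k\<in>K. msc (e k) (g k))"
    proof (rule sum.cong)
      fix k assume kK: "k \<in> K"
      then have "k < 2*n+2" using K2 by fastforce
      then show "msc (z $ \<iota> k) (g k) = msc (e k) (g k)" using zi kK by simp
    qed simp
    moreover have "z $ \<iota> (2*n) = c" using zi[of "2*n"] by (simp add: K_def)
    moreover have "z $ \<iota> (2*n+1) = c * \<mu>" using zi[of "2*n+1"] by (simp add: K_def)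
    ultimately have "f z = c *s (mexp (\<Sum>k\<in>K. msc (e k) (g k)) *v oh) + (c * \<mu>) *s vh"
      by (simp add: f_def)
    also have "\<dots> = u" by (simp add: c em vector_add_ldistrib vector_smult_assoc)
    finally show "u \<in> f ` S" using zS by blast
  qed
  have negS: "negligible S"
  proof (rule negligible_subset)
    show "negligible {z :: complex ^ ('m::{finite,wellorder}). z \<bullet> axis (\<iota> j) 1 = 0}"
      by (rule negligible_standard_hyperplane) (simp add: Basis_complex_def)
    show "S \<subseteq> {z :: complex ^ ('m::{finite,wellorder}). z \<bullet> axis (\<iota> j) 1 = 0}" by (auto simp: S_def inner_axis)
  qed
  have polyf: "polynomial_function f"
  proof -
    have mp: "mpoly (\<lambda>z :: complex ^ ('m::{finite,wellorder}). \<Sum>k\<in>K. msc (z $ \<iota> k) (g k))"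
      by (intro mpoly_sum finK mpoly_msc cpoly_nth mpoly_const)
    have pv: "polynomial_function (\<lambda>z :: complex ^ ('m::{finite,wellorder}). mexp (\<Sum>k\<in>K. msc (z $ \<iota> k) (g k)) *v oh)"
      by (intro vpoly_mv mpoly_mexp mp)
    show ?thesis unfolding f_def
      by (intro vpoly) (auto intro!: polynomial_function_add cpoly_mult cpoly_nth poly_nth[OF pv])
  qed
  have "negligible (f ` S)"
    by (rule negligible_differentiable_image_negligible[OF order_refl negS])
       (rule differentiable_on_polynomial_function[OF polyf])
  then have "negligible (f ` S \<union> V')" using negV' by (rule negligible_Un)
  moreover have "UNIV \<subseteq> f ` S \<union> V'" using cover by blast
  ultimately have "negligible (UNIV :: (complex ^ ('m::{finite,wellorder})) set)" using negligible_subset by blast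
  then show False by simp
qed

lemma part2: "inj_on (theta vh) w"
proof (rule inj_onI)
  fix A B assume A: "A \<in> w" and B: "B \<in> w" and e: "theta vh A = theta vh B"
  have "(A - B) *v u \<in> cline vh" for u
    using theta_eq_imp[OF pres_h[OF w_h[OF A]] pres_h[OF w_h[OF B]] e] .
  then have "A - B = 0" using F5[OF w_diff[OF A B]] by blast
  then show "A = B" by simp
qed

lemma main: "theta vh t = ezero vh
       \<and> inj_on (theta vh) w
       \<and> theta vh ` alg h = ealg vh (theta vh ` w)
       \<and> (\<forall>a \<in> ualg {msc c (mexp X) | c X. c \<noteq> 0 \<and> X \<in> h}.
             a *v oh = 0 \<longrightarrow> theta vh a = ezero vh)"
  using part1 part2 part3 part4 unfolding Gexp_def by blast

end

theorem lemma3p1: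
  fixes n :: nat
    and x y :: "nat \<Rightarrow> ('m::{finite,wellorder}) cmat"
    and t :: "('m::{finite,wellorder}) cmat"
    and w h :: "('m::{finite,wellorder}) cmat set"
    and V' :: "(complex ^ ('m::{finite,wellorder})) set"
    and oh vh :: "complex ^ ('m::{finite,wellorder})"
  assumes n: "n \<ge> 1" and dimV: "CARD('m) = 2 * n + 2"
    and t_nz: "t \<noteq> 0"
    and upper: "strict_upper t" "\<And>i. i < n \<Longrightarrow> strict_upper (x i)"
        "\<And>i. i < n \<Longrightarrow> strict_upper (y i)"
    and br_xx: "\<And>i j. i < n \<Longrightarrow> j < n \<Longrightarrow> mbr (x i) (x j) = 0"
    and br_yy: "\<And>i j. i < n \<Longrightarrow> j < n \<Longrightarrow> mbr (y i) (y j) = 0"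
    and br_xy: "\<And>i j. i < n \<Longrightarrow> j < n \<Longrightarrow> mbr (x i) (y j) = (if i = j then t else 0)"
    and br_xt: "\<And>i. i < n \<Longrightarrow> mbr (x i) t = 0"
    and br_yt: "\<And>i. i < n \<Longrightarrow> mbr (y i) t = 0"
    and w_def: "w = {(\<Sum>i<n. msc (a i) (x i) + msc (b i) (y i)) | a b. True}"
    and h_def: "h = {X + msc c t | X c. X \<in> w}"
    and hyp: "vec.subspace V'" "vec.dim V' = CARD('m) - 1"
    and oh_nz: "oh \<noteq> 0"
    and orbit: "{cline (mexp X *v oh) | X. X \<in> h} = {cline u | u. u \<noteq> 0 \<and> u \<notin> V'}"
    and T_fix: "\<And>u. u \<in> V' \<Longrightarrow> u \<noteq> 0 \<Longrightarrow> cline (mexp t *v u) = cline u"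
    and vh_nz: "vh \<noteq> 0"
    and v_def: "pclosure {cline (mexp (msc s t) *v oh) | s. True}
                 - {cline (mexp (msc s t) *v oh) | s. True} = {cline vh}"
  shows "theta vh t = ezero vh
       \<and> inj_on (theta vh) w
       \<and> theta vh ` alg h = ealg vh (theta vh ` w)
       \<and> (\<forall>a \<in> ualg {msc c (mexp X) | c X. c \<noteq> 0 \<and> X \<in> h}.
             a *v oh = 0 \<longrightarrow> theta vh a = ezero vh)"
proof -
  interpret HS n x y t w h V' oh vh
    by (unfold_locales; fact assms)
  show ?thesis by (rule main)
qed

end
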